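(* Let $\vec{s}(x,y)=(x,y,\zeta(x,y))^{\mathsf T}$ be a smooth Monge-patch surface, and fix an image point with slant $0\le\sigma<\pi/2$ at which the $3\times2$ Jacobian $\mathcal{D}\vec{n}$ of the unit normal field has full rank (equivalently, the Gaussian curvature $\kappa_G=\kappa_1\kappa_2$ is nonzero). Consider the Lambertian image model $I=\vec{l}^{\mathsf T}\vec{n}+\beta$, so that the image gradient satisfies $\nabla I^{\mathsf T}=\vec{l}^{\mathsf T}\mathcal{D}\vec{n}$, where the light source $\vec{l}\in\mathbb{R}^3$ is random. Let $\vec{l}_t=UU^{\mathsf T}\vec{l}$ be the projection of $\vec{l}$ onto the tangent plane (with $U$ a $3\times2$ matrix with orthonormal columns spanning the tangent plane), and suppose $\vec{l}_t$ has density $p_{\vec{l}_t}$ with respect to two-dimensional Lebesgue measure on the tangent plane. Then, conditioned on $\mathcal{D}\vec{n}$, the image gradient $\nabla I\in\mathbb{R}^2$ has density $$p_{\nabla I\mid\mathcal{D}\vec{n}}(\nabla I\mid\mathcal{D}\vec{n})=\frac{\cos\sigma}{|\kappa_G|}\,p_{\vec{l}_t}\!\left(\nabla I^{\mathsf T}\mathcal{D}\vec{n}^{+}\right).$$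
   Context: The unit normal is $\vec{n}=\frac{\vec{s}_x\times\vec{s}_y}{\|\vec{s}_x\times\vec{s}_y\|}$ as a function of image position $(x,y)$; $\mathcal{D}\vec{n}$ is its $3\times 2$ Jacobian. The principal curvatures $\kappa_1,\kappa_2$ are the eigenvalues of the differential of the Gauss map (shape operator), and $\kappa_G=\kappa_1\kappa_2$. Slant $\sigma$ is the angle between the normal and the viewing ($z$) axis. $\beta$ is a constant offset; albedo is 1. $\mathcal{D}\vec{n}^{+}$ is the Moore–Penrose pseudo-inverse, and $\nabla I^{\mathsf T}\mathcal{D}\vec{n}^{+}$ is a row vector lying in the tangent plane. *)

theory Defs
  imports "HOL-Probability.Probability"
begin

primrec Ck :: "nat \<Rightarrow> (real^2 \<Rightarrow> real) \<Rightarrow> bool" where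
  "Ck 0 f = True"
| "Ck (Suc k) f = ((\<forall>x. f differentiable (at x)) \<and>
                   (\<forall>v. Ck k (\<lambda>x. frechet_derivative f (at x) v)))"

definition smooth_fun :: "(real^2 \<Rightarrow> real) \<Rightarrow> bool" where
  "smooth_fun f \<longleftrightarrow> (\<forall>k. Ck k f)"

definition monge :: "(real^2 \<Rightarrow> real) \<Rightarrow> real^2 \<Rightarrow> real^3" where
  "monge \<zeta> w = vector [w$1, w$2, \<zeta> w]"

definition s_x :: "(real^2 \<Rightarrow> real) \<Rightarrow> real^2 \<Rightarrow> real^3" where
  "s_x \<zeta> w = frechet_derivative (monge \<zeta>) (at w) (axis 1 1)"

definition s_y :: "(real^2 \<Rightarrow> real) \<Rightarrow> real^2 \<Rightarrow> real^3" where
  "s_y \<zeta> w = frechet_derivative (monge \<zeta>) (at w) (axis 2 1)"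

definition unit_normal :: "(real^2 \<Rightarrow> real) \<Rightarrow> real^2 \<Rightarrow> real^3" where
  "unit_normal \<zeta> w = (1 / norm (cross3 (s_x \<zeta> w) (s_y \<zeta> w))) *\<^sub>R cross3 (s_x \<zeta> w) (s_y \<zeta> w)"

definition tangent_plane :: "(real^2 \<Rightarrow> real) \<Rightarrow> real^2 \<Rightarrow> (real^3) set" where
  "tangent_plane \<zeta> w = span {s_x \<zeta> w, s_y \<zeta> w}"

definition jac_normal :: "(real^2 \<Rightarrow> real) \<Rightarrow> real^2 \<Rightarrow> real^2^3" where
  "jac_normal \<zeta> w = matrix (frechet_derivative (unit_normal \<zeta>) (at w))"

definition jac_surf :: "(real^2 \<Rightarrow> real) \<Rightarrow> real^2 \<Rightarrow> real^2^3" where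
  "jac_surf \<zeta> w = matrix (frechet_derivative (monge \<zeta>) (at w))"

(* matrix of the differential of the Gauss map (shape operator) on the tangent
   plane, in the basis (s_x, s_y): Dn = [s_x s_y] W *)
definition shape_matrix :: "(real^2 \<Rightarrow> real) \<Rightarrow> real^2 \<Rightarrow> real^2^2" where
  "shape_matrix \<zeta> w = (THE W. jac_normal \<zeta> w = jac_surf \<zeta> w ** W)"

(* Gaussian curvature = kappa_1 * kappa_2 = product of the eigenvalues of the
   shape operator = its determinant *)
definition gauss_curvature :: "(real^2 \<Rightarrow> real) \<Rightarrow> real^2 \<Rightarrow> real" where
  "gauss_curvature \<zeta> w = det (shape_matrix \<zeta> w)"

definition slant :: "(real^2 \<Rightarrow> real) \<Rightarrow> real^2 \<Rightarrow> real" where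
  "slant \<zeta> w = arccos ((unit_normal \<zeta> w \<bullet> axis 3 1) /
                         (norm (unit_normal \<zeta> w) * norm (axis 3 1 :: real^3)))"

definition image :: "real^3 \<Rightarrow> real \<Rightarrow> (real^2 \<Rightarrow> real) \<Rightarrow> real^2 \<Rightarrow> real" where
  "image l \<beta> \<zeta> w = l \<bullet> unit_normal \<zeta> w + \<beta>"

definition image_grad :: "real^3 \<Rightarrow> real \<Rightarrow> (real^2 \<Rightarrow> real) \<Rightarrow> real^2 \<Rightarrow> real^2" where
  "image_grad l \<beta> \<zeta> w0 = (\<chi> i. frechet_derivative (image l \<beta> \<zeta>) (at w0) (axis i 1))"

definition is_pinv :: "real^'n^'m \<Rightarrow> real^'m^'n \<Rightarrow> bool" where
  "is_pinv A X \<longleftrightarrow> A ** X ** A = A \<and> X ** A ** X = X \<and>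
     transpose (A ** X) = A ** X \<and> transpose (X ** A) = X ** A"

definition pinv :: "real^'n^'m \<Rightarrow> real^'m^'n" where
  "pinv A = (THE X. is_pinv A X)"

definition plane_lebesgue :: "real^2^3 \<Rightarrow> (real^3) measure" where
  "plane_lebesgue U = distr (lborel :: (real^2) measure) borel (\<lambda>u. U *v u)"

end

theory Submission
  imports Defs
begin

lemma lborel_linear:
  fixes f :: "real^'n::{finite,wellorder} \<Rightarrow> real^'n::_"
  assumes lf: "linear f" and d: "det (matrix f) \<noteq> 0"
  shows "lborel = density (distr lborel borel f) (\<lambda>_. ennreal \<bar>det (matrix f)\<bar>)"
proof (rule lborel_eqI)
  obtain g where g: "linear g" "\<And>x. g (f x) = x" "\<And>x. f (g x) = x"
    using lf d det_nz_iff_inj linear_injective_isomorphism by metis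
  have fm[measurable]: "f \<in> borel_measurable borel"
    by (intro borel_measurable_continuous_onI linear_continuous_on linear_conv_bounded_linear[THEN iffD1] lf)
  have dd: "det (matrix f) * det (matrix g) = 1"
  proof -
    have "matrix f ** matrix g = matrix (f \<circ> g)" using matrix_compose[OF g(1) lf] by simp
    also have "f \<circ> g = id" using g by auto
    finally show ?thesis by (metis det_I det_mul matrix_id_mat_1)
  qed
  fix l u :: "real^'n::{finite,wellorder}" assume le: "\<And>b. b \<in> Basis \<Longrightarrow> l \<bullet> b \<le> u \<bullet> b"
  have pre: "f -` box l u = g ` box l u"
  proof
    show "f -` box l u \<subseteq> g ` box l u"
    proof
      fix x assume "x \<in> f -` box l u" then show "x \<in> g ` box l u" using g(2)[of x] by (metis image_eqI vimageE)
    qed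
    show "g ` box l u \<subseteq> f -` box l u" using g(3) by auto
  qed
  have bm: "g ` box l u \<in> lmeasurable" by (rule measurable_linear_image[OF g(1)]) simp
  have "emeasure lborel (g ` box l u) = emeasure lebesgue (g ` box l u)"
  proof -
    have gb: "g ` box l u \<in> sets borel" unfolding pre[symmetric] by (rule measurable_sets_borel[OF fm]) simp
    then show ?thesis by simp
  qed
  also have "\<dots> = measure lebesgue (g ` box l u)" using bm by (simp add: emeasure_eq_measure2)
  also have "\<dots> = \<bar>det (matrix g)\<bar> * measure lebesgue (box l u)"
    using measure_linear_image[OF g(1), of "box l u"] by simp
  finally have e: "emeasure lborel (g ` box l u) = ennreal (\<bar>det (matrix g)\<bar> * measure lebesgue (box l u))" .
  have mb: "measure lebesgue (box l u) = (\<Prod>b\<in>Basis. (u - l) \<bullet> b)"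
    using le by (simp add: measure_lborel_box_eq)
  have "emeasure (density (distr lborel borel f) (\<lambda>_. ennreal \<bar>det (matrix f)\<bar>)) (box l u)
     = ennreal \<bar>det (matrix f)\<bar> * emeasure (distr lborel borel f) (box l u)"
    by (simp add: emeasure_density nn_integral_cmult_indicator)
  also have "\<dots> = ennreal \<bar>det (matrix f)\<bar> * emeasure lborel (g ` box l u)"
    by (simp add: emeasure_distr pre)
  also have "\<dots> = ennreal (\<bar>det (matrix f)\<bar> * (\<bar>det (matrix g)\<bar> * measure lebesgue (box l u)))"
    by (simp add: e ennreal_mult)
  also have "\<dots> = (\<Prod>b\<in>Basis. (u - l) \<bullet> b)"
    using dd mb by (simp add: abs_mult[symmetric] mult.assoc[symmetric])
  finally show "emeasure (density (distr lborel borel f) (\<lambda>_. ennreal \<bar>det (matrix f)\<bar>)) (box l u) = (\<Prod>b\<in>Basis. (u - l) \<bullet> b)" .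
qed simp

lemma linear_meas[measurable]:
  fixes f :: "'b::euclidean_space \<Rightarrow> 'c::euclidean_space"
  assumes "linear f" shows "f \<in> borel_measurable borel"
  by (intro borel_measurable_continuous_onI linear_continuous_on linear_conv_bounded_linear[THEN iffD1] assms)

lemma dens_linear:
  fixes Y :: "'a \<Rightarrow> real^'n::{finite,wellorder}" and L :: "((real,'n::_) vec,'n::_) vec" and h :: "(real,'n::_) vec \<Rightarrow> (real,'n::_) vec"
  assumes dY: "distributed M lborel Y q" and dL: "det L \<noteq> 0"
    and hl: "linear h" and h1: "\<And>y. h (L *v y) = y" and h2: "\<And>g. L *v (h g) = g"
  shows "distributed M lborel (\<lambda>\<omega>. L *v Y \<omega>) (\<lambda>g. ennreal (1 / \<bar>det L\<bar>) * q (h g))"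
proof -
  have Ym[measurable]: "Y \<in> borel_measurable M" and qm[measurable]: "q \<in> borel_measurable lborel"
    and dq: "distr M lborel Y = density lborel q" using dY by (auto simp: distributed_def)
  have fl: "linear (\<lambda>x. L *v x)" by (simp add: matrix_vector_mul_linear)
  have hm[measurable]: "h \<in> borel_measurable borel" using hl by (rule linear_meas)
  have fm[measurable]: "(\<lambda>x. L *v x) \<in> borel_measurable borel" using fl by (rule linear_meas)
  have "matrix h ** L = matrix h ** matrix (\<lambda>x. L *v x)" by simp
  also have "\<dots> = matrix (h \<circ> (\<lambda>x. L *v x))" using matrix_compose[OF fl hl] by simp
  also have "h \<circ> (\<lambda>x. L *v x) = id" using h1 by auto
  finally have "matrix h ** L = mat 1" by (metis matrix_id_mat_1)
  then have dh: "det (matrix h) * det L = 1" by (metis det_I det_mul)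
  then have dh0: "det (matrix h) \<noteq> 0" by auto
  have absdh: "\<bar>det (matrix h)\<bar> = 1 / \<bar>det L\<bar>" using dh dL by (simp add: field_simps abs_mult[symmetric])
  define c where "c = ennreal (1 / \<bar>det L\<bar>)"
  have lb: "lborel = density (distr lborel borel h) (\<lambda>_. c)"
    using lborel_linear[OF hl dh0] absdh c_def by simp
  have "density lborel q = density (density (distr lborel borel h) (\<lambda>_. c)) q"
    by (subst lb) simp
  also have "\<dots> = density (distr lborel borel h) (\<lambda>x. c * q x)"
    by (subst density_density_eq) auto
  also have "\<dots> = distr (density lborel (\<lambda>g. c * q (h g))) borel h"
    by (subst density_distr) auto
  finally have e1: "density lborel q = distr (density lborel (\<lambda>g. c * q (h g))) borel h" .
  have "distr M lborel (\<lambda>\<omega>. L *v Y \<omega>) = distr (distr M lborel Y) lborel (\<lambda>x. L *v x)"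
    by (subst distr_distr) (auto simp: o_def)
  also have "\<dots> = distr (distr (density lborel (\<lambda>g. c * q (h g))) borel h) lborel (\<lambda>x. L *v x)"
    by (simp add: dq e1)
  also have "\<dots> = distr (density lborel (\<lambda>g. c * q (h g))) lborel (\<lambda>g. L *v h g)"
    by (subst distr_distr) (auto simp: o_def)
  also have "\<dots> = distr (density lborel (\<lambda>g. c * q (h g))) lborel (\<lambda>g. g)"
    by (simp add: h2)
  also have "\<dots> = density lborel (\<lambda>g. c * q (h g))"
    by (rule distr_id2) simp
  finally show ?thesis unfolding distributed_def c_def by auto
qed

declare transpose_matrix_vector[simp del]

lemma pinv_unique:
  fixes A :: "real^'n^'m"
  assumes x: "is_pinv A X" and y: "is_pinv A Y"
  shows "X = Y"
proof -
  from x have x1: "A ** X ** A = A" and x2: "X ** A ** X = X" and x3: "transpose (A ** X) = A ** X"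
    and x4: "transpose (X ** A) = X ** A" by (auto simp: is_pinv_def)
  from y have y1: "A ** Y ** A = A" and y2: "Y ** A ** Y = Y" and y3: "transpose (A ** Y) = A ** Y"
    and y4: "transpose (Y ** A) = Y ** A" by (auto simp: is_pinv_def)
  have AT: "transpose A = transpose A ** transpose Y ** transpose A"
    by (metis y1 matrix_transpose_mul matrix_mul_assoc)
  have "X = X ** transpose (A ** X)" by (metis x2 x3 matrix_mul_assoc)
  also have "\<dots> = X ** transpose X ** transpose A" by (simp add: matrix_transpose_mul matrix_mul_assoc)
  also have "\<dots> = X ** transpose X ** (transpose A ** transpose Y ** transpose A)" using AT by simp
  also have "\<dots> = X ** (transpose (A ** X)) ** (transpose (A ** Y))"
    by (simp add: matrix_transpose_mul matrix_mul_assoc)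
  also have "\<dots> = X ** A ** X ** A ** Y" by (simp add: x3 y3 matrix_mul_assoc)
  also have "\<dots> = X ** A ** Y" by (simp add: x2)
  finally have X: "X = X ** A ** Y" .
  have "Y = transpose (Y ** A) ** Y" by (metis y2 y4)
  also have "\<dots> = transpose A ** transpose Y ** Y" by (simp add: matrix_transpose_mul)
  also have "\<dots> = (transpose A ** transpose X ** transpose A) ** transpose Y ** Y"
    by (metis x1 matrix_transpose_mul matrix_mul_assoc)
  also have "\<dots> = transpose (X ** A) ** transpose (Y ** A) ** Y"
    by (simp add: matrix_transpose_mul matrix_mul_assoc)
  also have "\<dots> = X ** A ** Y ** A ** Y" by (simp add: x4 y4 matrix_mul_assoc)
  also have "\<dots> = X ** A ** Y" by (metis y2 matrix_mul_assoc)
  finally show ?thesis using X by simp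
qed

lemma is_pinv_factor:
  fixes U :: "real^'k^'m" and B Bi :: "real^'k^'k"
  assumes U: "transpose U ** U = mat 1" and b1: "B ** Bi = mat 1" and b2: "Bi ** B = mat 1"
  shows "is_pinv (U ** B) (Bi ** transpose U)"
proof -
  have AX: "U ** B ** (Bi ** transpose U) = U ** transpose U"
    by (metis b1 matrix_mul_assoc matrix_mul_rid)
  have XA: "Bi ** transpose U ** (U ** B) = mat 1"
    by (metis U b2 matrix_mul_assoc matrix_mul_rid)
  show ?thesis unfolding is_pinv_def
  proof (intro conjI)
    show "U ** B ** (Bi ** transpose U) ** (U ** B) = U ** B" by (simp add: AX) (metis U matrix_mul_assoc matrix_mul_lid)
    show "Bi ** transpose U ** (U ** B) ** (Bi ** transpose U) = Bi ** transpose U" by (simp add: XA)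
    show "transpose (U ** B ** (Bi ** transpose U)) = U ** B ** (Bi ** transpose U)"
      by (simp add: AX matrix_transpose_mul)
    show "transpose (Bi ** transpose U ** (U ** B)) = Bi ** transpose U ** (U ** B)" by (simp add: XA)
  qed
qed

lemma proj_dist:
  fixes U :: "real^2^3" and l :: "'a \<Rightarrow> real^3"
  assumes U: "transpose U ** U = mat 1" and lm[measurable]: "l \<in> borel_measurable M"
    and d: "distributed M (plane_lebesgue U) (\<lambda>\<omega>. U *v (transpose U *v l \<omega>)) p"
  shows "distributed M lborel (\<lambda>\<omega>. transpose U *v l \<omega>) (\<lambda>a. p (U *v a))"
proof -
  have sp: "sets (plane_lebesgue U) = sets borel" by (simp add: plane_lebesgue_def)
  have pm[measurable]: "p \<in> borel_measurable borel"
    using d sp by (auto simp: distributed_def cong: measurable_cong_sets)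
  have Vm[measurable]: "(\<lambda>u. U *v u) \<in> borel_measurable borel" by (rule linear_meas) (simp add: matrix_vector_mul_linear)
  have Pm[measurable]: "(\<lambda>u. transpose U *v u) \<in> borel_measurable borel" by (rule linear_meas[OF matrix_vector_mul_linear])
  have PV: "\<And>a. transpose U *v (U *v a) = a" by (simp add: matrix_vector_mul_assoc U del: transpose_matrix_vector)
  have Ym[measurable]: "(\<lambda>\<omega>. transpose U *v l \<omega>) \<in> borel_measurable M" by (rule measurable_compose[OF lm Pm])
  have Zm[measurable]: "(\<lambda>\<omega>. U *v (transpose U *v l \<omega>)) \<in> borel_measurable M" by (rule measurable_compose[OF Ym Vm])
  have dd: "distr M (plane_lebesgue U) (\<lambda>\<omega>. U *v (transpose U *v l \<omega>)) = density (plane_lebesgue U) p"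
    using d by (simp add: distributed_def)
  have "density (plane_lebesgue U) p = distr (density lborel (\<lambda>a. p (U *v a))) borel (\<lambda>u. U *v u)"
    unfolding plane_lebesgue_def by (subst density_distr) auto
  then have e: "distr M borel (\<lambda>\<omega>. U *v (transpose U *v l \<omega>)) = distr (density lborel (\<lambda>a. p (U *v a))) borel (\<lambda>u. U *v u)"
    using dd by (metis distr_cong sp)
  have "distr M lborel (\<lambda>\<omega>. transpose U *v l \<omega>) = distr (distr M borel (\<lambda>\<omega>. U *v (transpose U *v l \<omega>))) lborel (\<lambda>u. transpose U *v u)"
    by (subst distr_distr) (auto simp: o_def PV simp del: transpose_matrix_vector)
  also have "\<dots> = distr (distr (density lborel (\<lambda>a. p (U *v a))) borel (\<lambda>u. U *v u)) lborel (\<lambda>u. transpose U *v u)"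
    unfolding e by (rule refl)
  also have "\<dots> = distr (density lborel (\<lambda>a. p (U *v a))) lborel (\<lambda>a. a)"
    by (subst distr_distr) (auto simp: o_def PV simp del: transpose_matrix_vector)
  also have "\<dots> = density lborel (\<lambda>a. p (U *v a))" by (rule distr_id2) simp
  finally show ?thesis unfolding distributed_def by auto
qed


lemma core:
  fixes U Dn :: "real^2^3" and l :: "'a \<Rightarrow> real^3"
  assumes UU: "transpose U ** U = mat 1" and UD: "U ** (transpose U ** Dn) = Dn" and rk: "rank Dn = 2"
    and lm: "l \<in> borel_measurable M"
    and d: "distributed M (plane_lebesgue U) (\<lambda>\<omega>. U *v (transpose U *v l \<omega>)) p"
  shows "distributed M lborel (\<lambda>\<omega>. transpose Dn *v l \<omega>)
           (\<lambda>g. ennreal (1 / \<bar>det (transpose U ** Dn)\<bar>) * p (g v* pinv Dn))"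
proof -
  define B where "B = transpose U ** Dn"
  have DB: "Dn = U ** B" using UD B_def by simp
  have "rank Dn \<le> rank B" unfolding DB by (rule rank_mul_le_right)
  then have dB: "det B \<noteq> 0" using rk det_eq_0_rank[of B] by simp
  define L where "L = transpose B"
  have dL: "det L \<noteq> 0" using dB L_def by simp
  obtain Li where Li: "L ** Li = mat 1" "Li ** L = mat 1"
    using dL invertible_det_nz invertible_def by metis
  have Y: "distributed M lborel (\<lambda>\<omega>. transpose U *v l \<omega>) (\<lambda>a. p (U *v a))"
    by (rule proj_dist[OF UU lm d])
  have dl: "distributed M lborel (\<lambda>\<omega>. L *v (transpose U *v l \<omega>))
      (\<lambda>g. ennreal (1 / \<bar>det L\<bar>) * p (U *v (Li *v g)))"
    by (rule dens_linear[OF Y dL, of "\<lambda>g. Li *v g"]) (simp_all add: matrix_vector_mul_assoc Li matrix_vector_mul_linear)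
  have eq1: "\<And>\<omega>. transpose Dn *v l \<omega> = L *v (transpose U *v l \<omega>)"
    by (simp add: DB L_def matrix_transpose_mul matrix_vector_mul_assoc)
  have b1: "B ** transpose Li = mat 1" using Li(2) unfolding L_def by (metis matrix_transpose_mul transpose_mat transpose_transpose)
  have b2: "transpose Li ** B = mat 1" using Li(1) unfolding L_def by (metis matrix_transpose_mul transpose_mat transpose_transpose)
  have pinv: "pinv Dn = transpose Li ** transpose U"
    unfolding pinv_def
  proof (rule the_equality)
    show "is_pinv Dn (transpose Li ** transpose U)" unfolding DB by (rule is_pinv_factor[OF UU b1 b2])
    then show "\<And>X. is_pinv Dn X \<Longrightarrow> X = transpose Li ** transpose U" using pinv_unique by blast
  qed
  have eq2: "\<And>g. g v* pinv Dn = U *v (Li *v g)"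
    by (simp add: pinv transpose_matrix_vector[symmetric] matrix_transpose_mul matrix_vector_mul_assoc)
  have eq3: "det (transpose U ** Dn) = det L" by (simp add: L_def B_def)
  show ?thesis using dl by (simp add: eq1 eq2 eq3)
qed


definition zx :: "(real^2 \<Rightarrow> real) \<Rightarrow> real^2 \<Rightarrow> real" where
  "zx \<zeta> w = frechet_derivative \<zeta> (at w) (axis 1 1)"
definition zy :: "(real^2 \<Rightarrow> real) \<Rightarrow> real^2 \<Rightarrow> real" where
  "zy \<zeta> w = frechet_derivative \<zeta> (at w) (axis 2 1)"

lemma smooth_diff:
  assumes "smooth_fun \<zeta>"
  shows "\<And>w. \<zeta> differentiable (at w)" and "\<And>w. zx \<zeta> differentiable (at w)" and "\<And>w. zy \<zeta> differentiable (at w)"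
proof -
  have "Ck 2 \<zeta>" using assms smooth_fun_def by blast
  then have c: "(\<forall>x. \<zeta> differentiable (at x)) \<and> (\<forall>v. (\<forall>x. (\<lambda>x. frechet_derivative \<zeta> (at x) v) differentiable (at x)))"
    by (simp add: numeral_2_eq_2)
  then show "\<And>w. \<zeta> differentiable (at w)" by blast
  show "\<And>w. zx \<zeta> differentiable (at w)" using c unfolding zx_def[abs_def] by blast
  show "\<And>w. zy \<zeta> differentiable (at w)" using c unfolding zy_def[abs_def] by blast
qed

lemma vec3_decomp: "vector [a, b, c] = a *\<^sub>R axis 1 1 + b *\<^sub>R axis 2 1 + c *\<^sub>R (axis 3 1 :: real^3)"
  by (simp add: vec_eq_iff forall_3 axis_def)

lemma vec2_decomp: "(v::real^2) = v$1 *\<^sub>R axis 1 1 + v$2 *\<^sub>R axis 2 1"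
  by (simp add: vec_eq_iff forall_2 axis_def)

lemma dlin:
  assumes "\<zeta> differentiable (at w)"
  shows "frechet_derivative \<zeta> (at w) v = zx \<zeta> w * v$1 + zy \<zeta> w * v$2"
proof -
  have "linear (frechet_derivative \<zeta> (at w))"
    using assms frechet_derivative_works has_derivative_linear by blast
  then have "frechet_derivative \<zeta> (at w) (v$1 *\<^sub>R axis 1 1 + v$2 *\<^sub>R axis 2 1)
     = v$1 * frechet_derivative \<zeta> (at w) (axis 1 1) + v$2 * frechet_derivative \<zeta> (at w) (axis 2 1)"
    by (simp add: linear_add linear_scale)
  then show ?thesis using vec2_decomp[of v] by (simp add: zx_def zy_def)
qed

lemma monge_deriv:
  assumes "\<zeta> differentiable (at w)"
  shows "(monge \<zeta> has_derivative (\<lambda>h. vector [h$1, h$2, frechet_derivative \<zeta> (at w) h])) (at w)"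
proof -
  have m: "monge \<zeta> = (\<lambda>w. (w$1) *\<^sub>R axis 1 1 + (w$2) *\<^sub>R axis 2 1 + \<zeta> w *\<^sub>R (axis 3 1 :: real^3))"
    by (simp add: monge_def[abs_def] vec3_decomp)
  have d: "(\<zeta> has_derivative frechet_derivative \<zeta> (at w)) (at w)"
    using assms frechet_derivative_works by blast
  have "((\<lambda>w. (w$1) *\<^sub>R axis 1 1 + (w$2) *\<^sub>R axis 2 1 + \<zeta> w *\<^sub>R (axis 3 1 :: real^3)) has_derivative
     (\<lambda>h. (h$1) *\<^sub>R axis 1 1 + (h$2) *\<^sub>R axis 2 1 + frechet_derivative \<zeta> (at w) h *\<^sub>R (axis 3 1 :: real^3))) (at w)"
    by (intro derivative_eq_intros) (auto intro!: d bounded_linear_imp_has_derivative bounded_linear_vec_nth)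
  then show ?thesis unfolding m by (simp add: vec3_decomp)
qed

lemma sxy:
  assumes "\<zeta> differentiable (at w)"
  shows "s_x \<zeta> w = vector [1, 0, zx \<zeta> w]" "s_y \<zeta> w = vector [0, 1, zy \<zeta> w]"
    "frechet_derivative (monge \<zeta>) (at w) = (\<lambda>h. vector [h$1, h$2, zx \<zeta> w * h$1 + zy \<zeta> w * h$2])"
proof -
  have f: "frechet_derivative (monge \<zeta>) (at w) = (\<lambda>h. vector [h$1, h$2, frechet_derivative \<zeta> (at w) h])"
    using frechet_derivative_at[OF monge_deriv[OF assms]] by simp
  show "s_x \<zeta> w = vector [1, 0, zx \<zeta> w]" by (simp add: s_x_def f zx_def axis_def)
  show "s_y \<zeta> w = vector [0, 1, zy \<zeta> w]" by (simp add: s_y_def f zy_def axis_def)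
  show "frechet_derivative (monge \<zeta>) (at w) = (\<lambda>h. vector [h$1, h$2, zx \<zeta> w * h$1 + zy \<zeta> w * h$2])"
    using f dlin[OF assms] by simp
qed

definition NN :: "(real^2 \<Rightarrow> real) \<Rightarrow> real^2 \<Rightarrow> real" where
  "NN \<zeta> w = sqrt ((zx \<zeta> w)\<^sup>2 + (zy \<zeta> w)\<^sup>2 + 1)"

lemma NN_ge1: "NN \<zeta> w \<ge> 1"
  unfolding NN_def by (simp add: real_le_rsqrt)

lemma norm3: "norm (vector [a, b, c] :: real^3) = sqrt (a\<^sup>2 + b\<^sup>2 + c\<^sup>2)"
  by (simp add: norm_eq_sqrt_inner inner_vec_def sum_3 power2_eq_square)

lemma unit_normal_eq:
  assumes "\<And>w. \<zeta> differentiable (at w)"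
  shows "unit_normal \<zeta> w = (1 / NN \<zeta> w) *\<^sub>R vector [- zx \<zeta> w, - zy \<zeta> w, 1]"
proof -
  have c: "cross3 (s_x \<zeta> w) (s_y \<zeta> w) = vector [- zx \<zeta> w, - zy \<zeta> w, 1]"
    using sxy[OF assms] by (simp add: cross3_simps)
  show ?thesis unfolding unit_normal_def c norm3 NN_def by (simp add: power2_eq_square add.commute add.left_commute)
qed



lemma un_fun:
  assumes "smooth_fun \<zeta>"
  shows "unit_normal \<zeta> = (\<lambda>w. (1 / sqrt ((zx \<zeta> w)\<^sup>2 + (zy \<zeta> w)\<^sup>2 + 1)) *\<^sub>R
           ((- zx \<zeta> w) *\<^sub>R axis 1 1 + (- zy \<zeta> w) *\<^sub>R axis 2 1 + (1::real) *\<^sub>R (axis 3 1 :: real^3)))"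
proof (rule ext)
  fix w show "unit_normal \<zeta> w = (1 / sqrt ((zx \<zeta> w)\<^sup>2 + (zy \<zeta> w)\<^sup>2 + 1)) *\<^sub>R
           ((- zx \<zeta> w) *\<^sub>R axis 1 1 + (- zy \<zeta> w) *\<^sub>R axis 2 1 + (1::real) *\<^sub>R (axis 3 1 :: real^3))"
    by (simp only: unit_normal_eq[OF smooth_diff(1)[OF assms]] NN_def vec3_decomp)
qed

lemma un_diff:
  assumes "smooth_fun \<zeta>"
  shows "unit_normal \<zeta> differentiable (at w)"
proof -
  have dzx: "zx \<zeta> differentiable (at w)" and dzy: "zy \<zeta> differentiable (at w)"
    using smooth_diff(2,3)[OF assms] by auto
  have pos: "0 < (zx \<zeta> w)\<^sup>2 + (zy \<zeta> w)\<^sup>2 + 1" by (simp add: add_nonneg_pos)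
  have "(\<lambda>w. (zx \<zeta> w)\<^sup>2 + (zy \<zeta> w)\<^sup>2 + 1) differentiable (at w)"
    by (intro derivative_intros dzx dzy)
  then obtain G where G: "((\<lambda>w. (zx \<zeta> w)\<^sup>2 + (zy \<zeta> w)\<^sup>2 + 1) has_derivative G) (at w)"
    using differentiable_def by blast
  have dS: "(\<lambda>w. sqrt ((zx \<zeta> w)\<^sup>2 + (zy \<zeta> w)\<^sup>2 + 1)) differentiable (at w)"
    by (rule differentiableI[OF has_derivative_real_sqrt[OF pos G]])
  show ?thesis unfolding un_fun[OF assms]
    by (intro derivative_intros dS dzx dzy) (use pos in auto)
qed

lemma un_norm:
  assumes "smooth_fun \<zeta>"
  shows "unit_normal \<zeta> w \<bullet> unit_normal \<zeta> w = 1"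
proof -
  have pos: "0 < (zx \<zeta> w)\<^sup>2 + (zy \<zeta> w)\<^sup>2 + 1" by (simp add: add_nonneg_pos)
  have "unit_normal \<zeta> w \<bullet> unit_normal \<zeta> w = (1 / NN \<zeta> w)\<^sup>2 * ((zx \<zeta> w)\<^sup>2 + (zy \<zeta> w)\<^sup>2 + 1)"
    unfolding unit_normal_eq[OF smooth_diff(1)[OF assms]]
    by (simp add: inner_vec_def sum_3 power2_eq_square algebra_simps)
  also have "\<dots> = 1" unfolding NN_def using pos by (simp add: power_divide)
  finally show ?thesis .
qed

lemma un_orth:
  assumes "smooth_fun \<zeta>"
  shows "unit_normal \<zeta> w \<bullet> frechet_derivative (unit_normal \<zeta>) (at w) h = 0"
proof -
  let ?n = "unit_normal \<zeta>" and ?D = "frechet_derivative (unit_normal \<zeta>) (at w)"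
  have d: "(?n has_derivative ?D) (at w)" using un_diff[OF assms] frechet_derivative_works by blast
  have h1: "((\<lambda>w. ?n w \<bullet> ?n w) has_derivative (\<lambda>h. ?n w \<bullet> ?D h + ?D h \<bullet> ?n w)) (at w)"
    by (rule has_derivative_inner[OF d d])
  have c: "(\<lambda>w. ?n w \<bullet> ?n w) = (\<lambda>w. 1)" using un_norm[OF assms] by auto
  have h2: "((\<lambda>w. ?n w \<bullet> ?n w) has_derivative (\<lambda>h. 0)) (at w)" unfolding c by (rule has_derivative_const)
  have "(\<lambda>h. ?n w \<bullet> ?D h + ?D h \<bullet> ?n w) = (\<lambda>h. 0)" using has_derivative_unique[OF h1 h2] .
  then have "?n w \<bullet> ?D h + ?D h \<bullet> ?n w = 0" by metis
  then show ?thesis by (simp add: inner_commute)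
qed

lemma orth_third:
  assumes "smooth_fun \<zeta>" and "unit_normal \<zeta> w \<bullet> c = 0"
  shows "c$3 = zx \<zeta> w * c$1 + zy \<zeta> w * c$2"
proof -
  have N: "NN \<zeta> w > 0" using NN_ge1[of \<zeta> w] by simp
  have "(1 / NN \<zeta> w) * (- zx \<zeta> w * c$1 - zy \<zeta> w * c$2 + c$3) = 0"
    using assms(2) unfolding unit_normal_eq[OF smooth_diff(1)[OF assms(1)]]
    by (simp add: inner_vec_def sum_3 algebra_simps)
  then show ?thesis using N by simp
qed

lemma tangent_mem:
  assumes "smooth_fun \<zeta>" and "c$3 = zx \<zeta> w * c$1 + zy \<zeta> w * c$2"
  shows "c \<in> tangent_plane \<zeta> w"
proof -
  have "c = c$1 *\<^sub>R s_x \<zeta> w + c$2 *\<^sub>R s_y \<zeta> w"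
    using assms(2) sxy[OF smooth_diff(1)[OF assms(1)]] by (simp add: vec_eq_iff forall_3)
  also have "\<dots> \<in> tangent_plane \<zeta> w" unfolding tangent_plane_def
    by (intro span_add span_mul span_base) auto
  finally show ?thesis .
qed

lemma Dn_col:
  assumes "smooth_fun \<zeta>"
  shows "jac_normal \<zeta> w *v v = frechet_derivative (unit_normal \<zeta>) (at w) v"
proof -
  have "linear (frechet_derivative (unit_normal \<zeta>) (at w))"
    using un_diff[OF assms] frechet_derivative_works has_derivative_linear by blast
  then show ?thesis unfolding jac_normal_def by (metis matrix_vector_mul(2))
qed

lemma image_grad_eq:
  assumes "smooth_fun \<zeta>"
  shows "image_grad l \<beta> \<zeta> w = transpose (jac_normal \<zeta> w) *v l"
proof -
  let ?D = "frechet_derivative (unit_normal \<zeta>) (at w)"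
  have d: "(unit_normal \<zeta> has_derivative ?D) (at w)" using un_diff[OF assms] frechet_derivative_works by blast
  have "(image l \<beta> \<zeta> has_derivative (\<lambda>h. l \<bullet> ?D h)) (at w)"
    unfolding image_def[abs_def] by (intro derivative_eq_intros) (auto intro!: d)
  then have f: "frechet_derivative (image l \<beta> \<zeta>) (at w) = (\<lambda>h. l \<bullet> ?D h)"
    using frechet_derivative_at by metis
  show ?thesis
  proof (rule vec_eq_iff[THEN iffD2], rule allI)
    fix i
    have "image_grad l \<beta> \<zeta> w $ i = l \<bullet> (jac_normal \<zeta> w *v axis i 1)"
      by (simp add: image_grad_def f Dn_col[OF assms])
    also have "\<dots> = (\<Sum>k\<in>UNIV. l $ k * jac_normal \<zeta> w $ k $ i)"
      unfolding matrix_vector_mult_basis by (simp add: column_def inner_vec_def)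
    also have "\<dots> = (transpose (jac_normal \<zeta> w) *v l) $ i"
      by (simp add: matrix_vector_mult_def transpose_def mult.commute)
    finally show "image_grad l \<beta> \<zeta> w $ i = (transpose (jac_normal \<zeta> w) *v l) $ i" .
  qed
qed



lemma proj_id:
  fixes U :: "real^2^3" and A :: "real^'k^3"
  assumes UU: "transpose U ** U = mat 1" and r: "\<And>v. A *v v \<in> range (\<lambda>u. U *v u)"
  shows "U ** (transpose U ** A) = A"
proof (rule matrix_eq[THEN iffD2], rule allI)
  fix v
  obtain y where y: "A *v v = U *v y" using r[of v] by auto
  have "U ** (transpose U ** A) *v v = U *v (transpose U *v (A *v v))"
    by (simp add: matrix_vector_mul_assoc)
  also have "\<dots> = U *v y" unfolding y by (simp add: matrix_vector_mul_assoc UU)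
  finally show "U ** (transpose U ** A) *v v = A *v v" using y by simp
qed

lemma J_mult:
  assumes "smooth_fun \<zeta>"
  shows "jac_surf \<zeta> w *v v = vector [v$1, v$2, zx \<zeta> w * v$1 + zy \<zeta> w * v$2]"
proof -
  have d: "\<zeta> differentiable (at w)" using smooth_diff(1)[OF assms] by blast
  have "linear (frechet_derivative (monge \<zeta>) (at w))"
    using has_derivative_linear[OF monge_deriv[OF d]] frechet_derivative_at[OF monge_deriv[OF d]] by simp
  then have "jac_surf \<zeta> w *v v = frechet_derivative (monge \<zeta>) (at w) v"
    unfolding jac_surf_def by (metis matrix_vector_mul(2))
  then show ?thesis using sxy(3)[OF d] by simp
qed

lemma J_entry:
  assumes "smooth_fun \<zeta>"
  shows "jac_surf \<zeta> w $ k $ j = (vector [axis j 1 $ 1, axis j 1 $ 2, zx \<zeta> w * axis j 1 $ 1 + zy \<zeta> w * axis j 1 $ 2] :: real^3) $ k"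
proof -
  have "jac_surf \<zeta> w $ k $ j = (jac_surf \<zeta> w *v axis j 1) $ k"
    by (simp add: matrix_vector_mult_basis column_def)
  then show ?thesis using J_mult[OF assms] by simp
qed

lemma Dn_third:
  assumes "smooth_fun \<zeta>"
  shows "(jac_normal \<zeta> w *v v) $ 3 = zx \<zeta> w * (jac_normal \<zeta> w *v v) $ 1 + zy \<zeta> w * (jac_normal \<zeta> w *v v) $ 2"
  using orth_third[OF assms] un_orth[OF assms] Dn_col[OF assms] by metis

definition W0 :: "(real^2 \<Rightarrow> real) \<Rightarrow> real^2 \<Rightarrow> real^2^2" where
  "W0 \<zeta> w = (\<chi> i j. jac_normal \<zeta> w $ (if i = 1 then 1 else 2) $ j)"

lemma W0_mult: "(W0 \<zeta> w *v v) $ 1 = (jac_normal \<zeta> w *v v) $ 1" "(W0 \<zeta> w *v v) $ 2 = (jac_normal \<zeta> w *v v) $ 2"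
  by (simp_all add: W0_def matrix_vector_mult_def)

lemma Dn_JW:
  assumes "smooth_fun \<zeta>"
  shows "jac_normal \<zeta> w = jac_surf \<zeta> w ** W0 \<zeta> w"
proof (rule matrix_eq[THEN iffD2], rule allI)
  fix v
  show "jac_normal \<zeta> w *v v = jac_surf \<zeta> w ** W0 \<zeta> w *v v"
    unfolding matrix_vector_mul_assoc[symmetric] J_mult[OF assms] W0_mult
    using Dn_third[OF assms, of w v] by (simp add: vec_eq_iff forall_3)
qed

lemma shape_eq:
  assumes "smooth_fun \<zeta>"
  shows "shape_matrix \<zeta> w = W0 \<zeta> w"
  unfolding shape_matrix_def
proof (rule the_equality)
  show "jac_normal \<zeta> w = jac_surf \<zeta> w ** W0 \<zeta> w" by (rule Dn_JW[OF assms])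
  fix W assume h: "jac_normal \<zeta> w = jac_surf \<zeta> w ** W"
  show "W = W0 \<zeta> w"
  proof (rule matrix_eq[THEN iffD2], rule allI)
    fix v
    have "jac_surf \<zeta> w *v (W *v v) = jac_surf \<zeta> w *v (W0 \<zeta> w *v v)"
      using h Dn_JW[OF assms] by (simp add: matrix_vector_mul_assoc)
    then have "(jac_surf \<zeta> w *v (W *v v)) $ 1 = (jac_surf \<zeta> w *v (W0 \<zeta> w *v v)) $ 1"
      "(jac_surf \<zeta> w *v (W *v v)) $ 2 = (jac_surf \<zeta> w *v (W0 \<zeta> w *v v)) $ 2" by simp_all
    then show "W *v v = W0 \<zeta> w *v v" unfolding J_mult[OF assms] by (simp add: vec_eq_iff forall_2)
  qed
qed

lemma detJ:
  assumes "smooth_fun \<zeta>" and UU: "transpose U ** U = mat 1"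
    and tp: "range (\<lambda>u. U *v u) = tangent_plane \<zeta> w"
  shows "\<bar>det (transpose U ** jac_surf \<zeta> w)\<bar> = NN \<zeta> w"
proof -
  let ?J = "jac_surf \<zeta> w" and ?a = "zx \<zeta> w" and ?b = "zy \<zeta> w"
  have UJ: "U ** (transpose U ** ?J) = ?J"
  proof (rule proj_id[OF UU])
    fix v show "?J *v v \<in> range (\<lambda>u. U *v u)" unfolding tp
      by (rule tangent_mem[OF assms(1)]) (simp add: J_mult[OF assms(1)])
  qed
  let ?C = "transpose U ** ?J"
  have "det ?C * det ?C = det (transpose ?C ** ?C)" by (simp add: det_mul)
  also have "transpose ?C ** ?C = transpose ?J ** (U ** (transpose U ** ?J))"
    by (simp add: matrix_transpose_mul matrix_mul_assoc)
  also have "\<dots> = transpose ?J ** ?J" by (simp add: UJ)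
  also have "det (transpose ?J ** ?J) = (1 + ?a\<^sup>2) * (1 + ?b\<^sup>2) - (?a * ?b) * (?a * ?b)"
    by (simp add: det_2 matrix_matrix_mult_def transpose_def sum_3 J_entry[OF assms(1)] axis_def power2_eq_square)
  also have "\<dots> = (NN \<zeta> w)\<^sup>2" unfolding NN_def by (simp add: power2_eq_square algebra_simps)
  finally have "(det ?C)\<^sup>2 = (NN \<zeta> w)\<^sup>2" by (simp add: power2_eq_square)
  then show ?thesis using NN_ge1[of \<zeta> w]
    by (metis abs_of_nonneg order_trans zero_le_one power2_eq_iff_nonneg abs_ge_zero power2_abs)
qed

lemma cos_slant:
  assumes "smooth_fun \<zeta>"
  shows "cos (slant \<zeta> w) = 1 / NN \<zeta> w"
proof -
  have n1: "norm (unit_normal \<zeta> w) = 1" using un_norm[OF assms] by (simp add: norm_eq_sqrt_inner)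
  have n3: "unit_normal \<zeta> w \<bullet> axis 3 1 = 1 / NN \<zeta> w"
    unfolding unit_normal_eq[OF smooth_diff(1)[OF assms]] by (simp add: inner_axis)
  have N: "NN \<zeta> w \<ge> 1" by (rule NN_ge1)
  have "slant \<zeta> w = arccos (1 / NN \<zeta> w)" unfolding slant_def n1 n3 by simp
  moreover have p: "0 < 1 / NN \<zeta> w" using N by simp
  moreover have "1 / NN \<zeta> w \<le> 1" using N by auto
  moreover have "- 1 \<le> 1 / NN \<zeta> w" using p by linarith
  ultimately show ?thesis by simp
qed


theorem mainTheorem2:
  fixes \<zeta> :: "real^2 \<Rightarrow> real" and w0 :: "real^2" and \<beta> :: real
    and M :: "'a measure" and l :: "'a \<Rightarrow> real^3"
    and U :: "real^2^3" and p :: "real^3 \<Rightarrow> ennreal"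
  assumes "smooth_fun \<zeta>"
    and "0 \<le> slant \<zeta> w0" and "slant \<zeta> w0 < pi / 2"
    and "rank (jac_normal \<zeta> w0) = 2"
    and "prob_space M" and "l \<in> borel_measurable M"
    and "transpose U ** U = mat 1"
    and "range (\<lambda>u. U *v u) = tangent_plane \<zeta> w0"
    and "distributed M (plane_lebesgue U) (\<lambda>\<omega>. U *v (transpose U *v l \<omega>)) p"
  shows "distributed M lborel (\<lambda>\<omega>. image_grad (l \<omega>) \<beta> \<zeta> w0)
           (\<lambda>g. ennreal (cos (slant \<zeta> w0) / \<bar>gauss_curvature \<zeta> w0\<bar>)
                 * p (g v* pinv (jac_normal \<zeta> w0)))"
proof -
  note sm = assms(1) and UU = assms(7) and tp = assms(8)
  let ?Dn = "jac_normal \<zeta> w0"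
  have UD: "U ** (transpose U ** ?Dn) = ?Dn"
  proof (rule proj_id[OF UU])
    fix v show "?Dn *v v \<in> range (\<lambda>u. U *v u)" unfolding tp
      by (rule tangent_mem[OF sm Dn_third[OF sm]])
  qed
  have c: "distributed M lborel (\<lambda>\<omega>. transpose ?Dn *v l \<omega>)
           (\<lambda>g. ennreal (1 / \<bar>det (transpose U ** ?Dn)\<bar>) * p (g v* pinv ?Dn))"
    by (rule core[OF UU UD assms(4) assms(6) assms(9)])
  have "det (transpose U ** ?Dn) = det (transpose U ** jac_surf \<zeta> w0) * det (W0 \<zeta> w0)"
    by (simp add: Dn_JW[OF sm, of w0] matrix_mul_assoc det_mul)
  then have "\<bar>det (transpose U ** ?Dn)\<bar> = NN \<zeta> w0 * \<bar>gauss_curvature \<zeta> w0\<bar>"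
    by (simp add: abs_mult detJ[OF sm UU tp] gauss_curvature_def shape_eq[OF sm])
  then have k: "1 / \<bar>det (transpose U ** ?Dn)\<bar> = cos (slant \<zeta> w0) / \<bar>gauss_curvature \<zeta> w0\<bar>"
    by (simp add: cos_slant[OF sm])
  have g: "\<And>\<omega>. image_grad (l \<omega>) \<beta> \<zeta> w0 = transpose ?Dn *v l \<omega>"
    by (rule image_grad_eq[OF sm])
  show ?thesis using c unfolding g k .
qed


end
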